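(* There is an absolute constant $c_0<10$ such that for each $b\in(0,\pi)$, each $n\in\mathbb{N}$ and every odd trigonometric polynomial $T_n\in\mathcal{T}_n$, $$\|T_n'\|_{[-b/2,b/2]}\le \frac{c_0}{b}\,n\,\|T_n\|_{[-b,b]}.$$
   Context: $\mathcal{T}_n$ is the space of real trigonometric polynomials $\alpha_0+\sum_{k=1}^n(\alpha_k\cos kt+\beta_k\sin kt)$ of degree $\le n$. For a function $g$ on $[a,b]$, $\|g\|_{[a,b]}:=\max_{x\in[a,b]}|g(x)|$. *)

theory Defs
  imports "HOL-Analysis.Analysis"
begin

definition trig_poly :: "nat \<Rightarrow> (real \<Rightarrow> real) \<Rightarrow> bool" where
  "trig_poly n T \<longleftrightarrow> (\<exists>\<alpha> \<beta> :: nat \<Rightarrow> real.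
     \<forall>t. T t = \<alpha> 0 + (\<Sum>k=1..n. \<alpha> k * cos (real k * t) + \<beta> k * sin (real k * t)))"

definition sup_norm_on :: "(real \<Rightarrow> real) \<Rightarrow> real \<Rightarrow> real \<Rightarrow> real" where
  "sup_norm_on g a b = (SUP x\<in>{a..b}. \<bar>g x\<bar>)"

end

theory Submission
  imports Defs "HOL-Computational_Algebra.Polynomial"
begin

definition th :: "nat \<Rightarrow> nat \<Rightarrow> real" where
  "th m k = (2 * real k + 1) * pi / (2 * real m)"
definition ww :: "nat \<Rightarrow> nat \<Rightarrow> real" where
  "ww m k = 1 / (sin (th m k / 2))^2"

lemma th_reflect:
  assumes "m \<ge> 1" "k < 2*m"
  shows "th m (2*m - Suc k) = 2*pi - th m k"
proof -
  have "real (2*m - Suc k) = 2*real m - 1 - real k" using assms by (simp add: of_nat_diff)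
  then show ?thesis using assms unfolding th_def by (simp add: field_simps)
qed

lemma th_pos: "m \<ge> 1 \<Longrightarrow> k < 2*m \<Longrightarrow> 0 < th m k \<and> th m k < 2*pi"
proof -
  assume a: "m \<ge> 1" "k < 2*m"
  have "2 * real k + 1 < 2 * (2*real m)" using a by linarith
  then have "(2 * real k + 1) / (2*real m) < 2" using a by (simp add: field_simps)
  then have "(2 * real k + 1) / (2*real m) * pi < 2 * pi" by (intro mult_strict_right_mono) auto
  moreover have "0 < (2 * real k + 1) / (2*real m) * pi" using a by simp
  moreover have "th m k = (2 * real k + 1) / (2*real m) * pi" unfolding th_def by simp
  ultimately show ?thesis by simp
qed

lemma sin_half_th_pos: "m \<ge> 1 \<Longrightarrow> k < 2*m \<Longrightarrow> sin (th m k / 2) > 0"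
  using th_pos[of m k] by (intro sin_gt_zero) auto

lemma ww_reflect: "m \<ge> 1 \<Longrightarrow> k < 2*m \<Longrightarrow> ww m (2*m - Suc k) = ww m k"
  unfolding ww_def using th_reflect[of m k]
  by (simp add: diff_divide_distrib sin_diff)

lemma sign_reflect: "k < 2*m \<Longrightarrow> (-1::real)^(2*m - Suc k) = - ((-1)^k)"
proof -
  assume a: "k < 2*m"
  have "even (2*m - Suc k) \<longleftrightarrow> odd k" using a by presburger
  then show ?thesis by (cases "even k") auto
qed

definition HC :: "nat \<Rightarrow> real \<Rightarrow> real" where
  "HC m j = (\<Sum>k<2*m. (-1)^k * cos (j * th m k) * ww m k)"
definition FS :: "nat \<Rightarrow> real \<Rightarrow> real" where
  "FS m j = (\<Sum>k<2*m. (-1)^k * sin (j * th m k) * ww m k)"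

lemma HC_zero:
  assumes "m \<ge> 1"
  shows "HC m (real j) = 0"
proof -
  let ?g = "\<lambda>k. (-1::real)^k * cos (real j * th m k) * ww m k"
  have cj: "cos (real j * (2*pi - x)) = cos (real j * x)" for x
  proof -
    have "real j * (2*pi - x) = real (2*j) * pi - real j * x" by (simp add: algebra_simps)
    then show ?thesis by (simp add: cos_diff)
  qed
  have "(\<Sum>k<2*m. ?g (2*m - Suc k)) = (\<Sum>k<2*m. ?g k)" by (rule sum.nat_diff_reindex)
  moreover have "(\<Sum>k<2*m. ?g (2*m - Suc k)) = (\<Sum>k<2*m. - ?g k)"
    by (rule sum.cong) (simp_all add: th_reflect ww_reflect sign_reflect assms cj)
  ultimately have "(\<Sum>k<2*m. ?g k) = - (\<Sum>k<2*m. ?g k)" by (simp add: sum_negf)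
  then show ?thesis unfolding HC_def by simp
qed


lemma alt_sin_sum_zero:
  assumes "1 \<le> j" "j < m"
  shows "(\<Sum>k<2*m. (-1::real)^k * sin (real j * th m k)) = 0"
proof -
  define \<alpha> where "\<alpha> = real j * pi / (2 * real m)"
  have m0: "real m > 0" using assms by simp
  have jt: "real j * th m k = (2*real k + 1) * \<alpha>" for k
    unfolding th_def \<alpha>_def by (simp add: field_simps)
  have a0: "0 < \<alpha>" using assms unfolding \<alpha>_def by simp
  have "real j / (2 * real m) < 1/2" using assms m0 by (simp add: field_simps)
  then have "real j / (2 * real m) * pi < 1/2 * pi" by (intro mult_strict_right_mono) auto
  then have a1: "\<alpha> < pi/2" unfolding \<alpha>_def by simp
  have cpos: "cos \<alpha> > 0" using a0 a1 by (intro cos_gt_zero) auto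
  define u where "u k = (-1::real)^k * sin (2 * real k * \<alpha>)" for k
  have tm: "2 * cos \<alpha> * ((-1::real)^k * sin ((2*real k + 1) * \<alpha>)) = u k - u (Suc k)" for k
  proof -
    have "2 * cos \<alpha> * sin ((2*real k + 1) * \<alpha>) = sin (2 * real (Suc k) * \<alpha>) + sin (2 * real k * \<alpha>)"
    proof -
      have e1: "2 * real (Suc k) * \<alpha> = (2*real k + 1) * \<alpha> + \<alpha>" by (simp add: algebra_simps)
      have e2: "2 * real k * \<alpha> = (2*real k + 1) * \<alpha> - \<alpha>" by (simp add: algebra_simps)
      show ?thesis unfolding e1 e2 sin_add sin_diff by (simp add: algebra_simps)
    qed
    then show ?thesis unfolding u_def by (simp add: algebra_simps)
  qed
  have "2 * cos \<alpha> * (\<Sum>k<2*m. (-1::real)^k * sin (real j * th m k)) = (\<Sum>k<2*m. u k - u (Suc k))"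
    unfolding jt sum_distrib_left tm by simp
  also have "\<dots> = u 0 - u (2*m)" by (rule sum_lessThan_telescope')
  also have "u (2*m) = 0"
  proof -
    have h: "2 * real (2*m) * \<alpha> = real (2 * j) * pi" unfolding \<alpha>_def using m0 by (simp add: field_simps)
    show ?thesis unfolding u_def h by simp
  qed
  finally show ?thesis using cpos by (simp add: u_def)
qed

lemma FS_rec:
  assumes "m \<ge> 1"
  shows "FS m (j + 1) + FS m (j - 1) = 2 * FS m j - 4 * (\<Sum>k<2*m. (-1::real)^k * sin (j * th m k))"
proof -
  have t: "(-1)^k * sin ((j+1) * th m k) * ww m k + (-1)^k * sin ((j-1) * th m k) * ww m k
      = 2 * ((-1)^k * sin (j * th m k) * ww m k) - 4 * ((-1::real)^k * sin (j * th m k))" if "k < 2*m" for k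
  proof -
    have s: "sin (th m k / 2) \<noteq> 0" using sin_half_th_pos[OF assms that] by simp
    have c: "cos (th m k) = 1 - 2 * (sin (th m k / 2))^2"
      using cos_double_sin[of "th m k / 2"] by simp
    have e: "sin ((j+1) * th m k) + sin ((j-1) * th m k) = 2 * sin (j * th m k) * cos (th m k)"
      by (simp add: algebra_simps sin_add sin_diff)
    have w: "ww m k * (sin (th m k / 2))^2 = 1" using s unfolding ww_def by simp
    have "(-1)^k * sin ((j+1) * th m k) * ww m k + (-1)^k * sin ((j-1) * th m k) * ww m k
       = (-1)^k * ww m k * (sin ((j+1) * th m k) + sin ((j-1) * th m k))" by (simp add: algebra_simps)
    also have "\<dots> = (-1)^k * ww m k * (2 * sin (j * th m k) * (1 - 2 * (sin (th m k / 2))^2))"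
      unfolding e c ..
    also have "\<dots> = 2 * ((-1)^k * sin (j * th m k) * ww m k) - 4 * ((-1)^k * sin (j * th m k)) * (ww m k * (sin (th m k / 2))^2)"
      by (simp add: algebra_simps)
    finally show ?thesis unfolding w by simp
  qed
  show ?thesis unfolding FS_def sum.distrib[symmetric] sum_subtractf[symmetric] sum_distrib_left
    by (rule sum.cong) (simp_all add: t)
qed

lemma FS_lin:
  assumes "m \<ge> 1"
  shows "j \<le> m \<Longrightarrow> FS m (real j) = real j * FS m 1"
proof -
  have "Suc i \<le> m \<Longrightarrow> FS m (real i) = real i * FS m 1 \<and> FS m (real (Suc i)) = real (Suc i) * FS m 1" for i
  proof (induction i)
    case 0
    then show ?case by (simp add: FS_def)
  next
    case (Suc i)
    then have IH: "FS m (real i) = real i * FS m 1" "FS m (real (Suc i)) = real (Suc i) * FS m 1" by auto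
    have "FS m (real (Suc i) + 1) + FS m (real (Suc i) - 1) = 2 * FS m (real (Suc i))"
      using FS_rec[OF assms, of "real (Suc i)"] alt_sin_sum_zero[of "Suc i" m] Suc.prems by simp
    then have "FS m (real (Suc (Suc i))) = 2 * FS m (real (Suc i)) - FS m (real i)"
      by (simp add: add.commute)
    then show ?case using IH by (simp add: algebra_simps)
  qed
  moreover assume "j \<le> m"
  ultimately show ?thesis using assms by (cases j) (auto simp: FS_def)
qed

lemma FS_m:
  assumes "m \<ge> 1"
  shows "FS m (real m) = (\<Sum>k<2*m. ww m k)"
  unfolding FS_def
proof (rule sum.cong)
  fix k assume "k \<in> {..<2*m}"
  have "real m * th m k = real k * pi + pi/2" unfolding th_def using assms by (simp add: field_simps)
  then have "sin (real m * th m k) = (-1)^k" by (simp add: sin_add)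
  then show "(-1)^k * sin (real m * th m k) * ww m k = ww m k" by (simp flip: power_mult_distrib)
qed simp

lemma ww_pos: "m \<ge> 1 \<Longrightarrow> k < 2*m \<Longrightarrow> ww m k > 0"
  unfolding ww_def using sin_half_th_pos[of m k] by simp

lemma FS1_pos:
  assumes "m \<ge> 1"
  shows "FS m 1 > 0"
proof -
  have "(\<Sum>k<2*m. ww m k) > 0" using assms by (intro sum_pos) (auto intro: ww_pos simp: lessThan_empty_iff)
  then have "real m * FS m 1 > 0" using FS_m[OF assms] FS_lin[OF assms, of m] by simp
  moreover have "real m > 0" using assms by simp
  ultimately show ?thesis using zero_less_mult_pos by blast
qed


definition LL :: "nat \<Rightarrow> (real \<Rightarrow> real) \<Rightarrow> real \<Rightarrow> real" where
  "LL m F x = (\<Sum>k<2*m. (-1)^k * F (x + th m k) * ww m k)"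

inductive tp :: "nat \<Rightarrow> (real \<Rightarrow> real) \<Rightarrow> bool" for m where
  tpc: "j \<le> m \<Longrightarrow> tp m (\<lambda>x. c * cos (real j * x))"
| tps: "j \<le> m \<Longrightarrow> tp m (\<lambda>x. c * sin (real j * x))"
| tpa: "tp m f \<Longrightarrow> tp m g \<Longrightarrow> tp m (\<lambda>x. f x + g x)"

lemma riesz:
  assumes "m \<ge> 1"
  shows "tp m F \<Longrightarrow> \<exists>D. (\<forall>x. (F has_real_derivative D x) (at x)) \<and> (\<forall>x. LL m F x = FS m 1 * D x)"
proof (induction rule: tp.induct)
  case (tpc j c)
  have "LL m (\<lambda>x. c * cos (real j * x)) x = c * cos (real j * x) * HC m j - c * sin (real j * x) * FS m j" for x
    unfolding LL_def HC_def FS_def sum_distrib_left sum_subtractf[symmetric]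
    by (rule sum.cong) (simp_all add: distrib_left cos_add algebra_simps)
  then have "LL m (\<lambda>x. c * cos (real j * x)) x = FS m 1 * (- c * real j * sin (real j * x))" for x
    using HC_zero[OF assms, of j] FS_lin[OF assms tpc] by simp
  moreover have "((\<lambda>x. c * cos (real j * x)) has_real_derivative (- c * real j * sin (real j * x))) (at x)" for x
    by (auto intro!: derivative_eq_intros)
  ultimately show ?case by (intro exI[where x="\<lambda>x. - c * real j * sin (real j * x)"]) auto
next
  case (tps j c)
  have "LL m (\<lambda>x. c * sin (real j * x)) x = c * sin (real j * x) * HC m j + c * cos (real j * x) * FS m j" for x
    unfolding LL_def HC_def FS_def sum_distrib_left sum.distrib[symmetric]
    by (rule sum.cong) (simp_all add: distrib_left sin_add algebra_simps)
  then have "LL m (\<lambda>x. c * sin (real j * x)) x = FS m 1 * (c * real j * cos (real j * x))" for x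
    using HC_zero[OF assms, of j] FS_lin[OF assms tps] by simp
  moreover have "((\<lambda>x. c * sin (real j * x)) has_real_derivative (c * real j * cos (real j * x))) (at x)" for x
    by (auto intro!: derivative_eq_intros)
  ultimately show ?case by (intro exI[where x="\<lambda>x. c * real j * cos (real j * x)"]) auto
next
  case (tpa f g)
  then obtain Df Dg where f: "\<forall>x. (f has_real_derivative Df x) (at x)" "\<forall>x. LL m f x = FS m 1 * Df x"
    and g: "\<forall>x. (g has_real_derivative Dg x) (at x)" "\<forall>x. LL m g x = FS m 1 * Dg x" by blast
  have "LL m (\<lambda>x. f x + g x) x = LL m f x + LL m g x" for x
    unfolding LL_def sum.distrib[symmetric] by (rule sum.cong) (simp_all add: algebra_simps)
  then have "LL m (\<lambda>x. f x + g x) x = FS m 1 * (Df x + Dg x)" for x using f g by (simp add: algebra_simps)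
  moreover have "((\<lambda>x. f x + g x) has_real_derivative (Df x + Dg x)) (at x)" for x
    using f g by (auto intro!: derivative_eq_intros)
  ultimately show ?case by (intro exI[where x="\<lambda>x. Df x + Dg x"]) auto
qed

lemma bernstein:
  assumes "m \<ge> 1" "tp m F" "\<And>x. \<bar>F x\<bar> \<le> M" "(F has_real_derivative D0) (at x0)"
  shows "\<bar>D0\<bar> \<le> real m * M"
proof -
  obtain D where D: "\<forall>x. (F has_real_derivative D x) (at x)" "\<forall>x. LL m F x = FS m 1 * D x"
    using riesz[OF assms(1,2)] by blast
  have "D x0 = D0" using D(1) assms(4) DERIV_unique by blast
  have "\<bar>LL m F x0\<bar> \<le> (\<Sum>k<2*m. \<bar>(-1)^k * F (x0 + th m k) * ww m k\<bar>)"
    unfolding LL_def by (rule sum_abs)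
  also have "\<dots> \<le> (\<Sum>k<2*m. M * ww m k)"
  proof (rule sum_mono)
    fix k assume "k \<in> {..<2*m}"
    then have "ww m k > 0" using ww_pos assms(1) by auto
    then show "\<bar>(-1)^k * F (x0 + th m k) * ww m k\<bar> \<le> M * ww m k"
      using assms(3)[of "x0 + th m k"] by (simp add: abs_mult mult_right_mono)
  qed
  also have "\<dots> = M * (real m * FS m 1)"
    using FS_m[OF assms(1)] FS_lin[OF assms(1), of m] by (simp add: sum_distrib_left)
  finally have "FS m 1 * \<bar>D0\<bar> \<le> FS m 1 * (real m * M)"
    using D(2) \<open>D x0 = D0\<close> FS1_pos[OF assms(1)] by (simp add: abs_mult algebra_simps)
  then show ?thesis using FS1_pos[OF assms(1)] by simp
qed


lemma tp_mono: "tp m F \<Longrightarrow> m \<le> m' \<Longrightarrow> tp m' F"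
  by (induction rule: tp.induct) (auto intro: tp.intros)

lemma tp_const: "tp m (\<lambda>x. c)"
  using tpc[of 0 m c] by simp

lemma tp_cos_mult: "tp m F \<Longrightarrow> tp (Suc m) (\<lambda>x. cos x * F x)"
proof (induction rule: tp.induct)
  case (tpc j c)
  show ?case
  proof (cases "j = 0")
    case True
    then show ?thesis using tp.tpc[of 1 "Suc m" c] by (simp add: mult.commute)
  next
    case False
    have "(\<lambda>x. cos x * (c * cos (real j * x))) = (\<lambda>x. c/2 * cos (real (Suc j) * x) + c/2 * cos (real (j - 1) * x))"
    proof
      fix x
      have r: "real (j - 1) = real j - 1" using False by (simp add: of_nat_diff)
      show "cos x * (c * cos (real j * x)) = c/2 * cos (real (Suc j) * x) + c/2 * cos (real (j - 1) * x)"
        unfolding r by (simp add: algebra_simps cos_add cos_diff)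
    qed
    moreover have "tp (Suc m) (\<lambda>x. c/2 * cos (real (Suc j) * x) + c/2 * cos (real (j - 1) * x))"
      using tpc.hyps by (intro tp.tpa tp.tpc) auto
    ultimately show ?thesis by simp
  qed
next
  case (tps j c)
  show ?case
  proof (cases "j = 0")
    case True
    then show ?thesis using tp.tps[of 0 "Suc m" c] by simp
  next
    case False
    have "(\<lambda>x. cos x * (c * sin (real j * x))) = (\<lambda>x. c/2 * sin (real (Suc j) * x) + c/2 * sin (real (j - 1) * x))"
    proof
      fix x
      have r: "real (j - 1) = real j - 1" using False by (simp add: of_nat_diff)
      show "cos x * (c * sin (real j * x)) = c/2 * sin (real (Suc j) * x) + c/2 * sin (real (j - 1) * x)"
        unfolding r by (simp add: algebra_simps sin_add sin_diff)
    qed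
    moreover have "tp (Suc m) (\<lambda>x. c/2 * sin (real (Suc j) * x) + c/2 * sin (real (j - 1) * x))"
      using tps.hyps by (intro tp.tpa tp.tps) auto
    ultimately show ?thesis by simp
  qed
next
  case (tpa f g)
  then show ?case using tp.tpa[OF tpa.IH] by (simp add: distrib_left)
qed

lemma tp_poly: "degree P \<le> N \<Longrightarrow> tp N (\<lambda>x. poly P (cos x))"
proof (induction N arbitrary: P)
  case 0
  obtain a p where P: "P = pCons a p" by (cases P)
  have "p = 0" using 0 P by (cases "p = 0") (auto simp: degree_pCons_eq)
  then show ?case using P tp_const by simp
next
  case (Suc N)
  obtain a p where P: "P = pCons a p" by (cases P)
  have "degree p \<le> N" using Suc.prems P by (cases "p = 0") (auto simp: degree_pCons_eq)
  then have "tp (Suc N) (\<lambda>x. cos x * poly p (cos x))" using Suc.IH tp_cos_mult by blast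
  then have "tp (Suc N) (\<lambda>x. a + cos x * poly p (cos x))" using tp_const tp.tpa by blast
  then show ?case using P by simp
qed


fun V :: "nat \<Rightarrow> real poly" where
  "V 0 = [:0, 1:]"
| "V (Suc 0) = [:0, 3, 0, -4:]"
| "V (Suc (Suc r)) = smult 2 ([:1, 0, -2:] * V (Suc r)) - V r"

lemma V_props: "poly (V r) (sin x) = sin ((2 * real r + 1) * x) \<and> degree (V r) \<le> 2 * r + 1"
proof (induction r rule: V.induct)
  case 1
  then show ?case by simp
next
  case 2
  have "sin (3 * x) = sin (2 * x + x)" by simp
  also have "\<dots> = 2 * sin x * cos x * cos x + (1 - 2 * (sin x)^2) * sin x"
    unfolding sin_add sin_double cos_double_sin by simp
  also have "\<dots> = 3 * sin x - 4 * sin x ^ 3"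
  proof -
    have c2: "cos x * cos x = 1 - sin x * sin x" using sin_cos_squared_add[of x] by (simp add: power2_eq_square)
    show ?thesis using c2 by (simp add: power2_eq_square power3_eq_cube) algebra
  qed
  finally have "sin (3 * x) = 3 * sin x - 4 * sin x ^ 3" .
  then show ?case by (simp add: algebra_simps power3_eq_cube)
next
  case (3 r)
  have "sin ((2 * real (Suc (Suc r)) + 1) * x) = 2 * (1 - 2 * sin x ^ 2) * sin ((2 * real (Suc r) + 1) * x) - sin ((2 * real r + 1) * x)"
  proof -
    define A where "A = (2 * real (Suc r) + 1) * x"
    have e1: "(2 * real (Suc (Suc r)) + 1) * x = A + 2 * x" unfolding A_def by (simp add: algebra_simps)
    have e2: "(2 * real r + 1) * x = A - 2 * x" unfolding A_def by (simp add: algebra_simps)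
    show ?thesis unfolding e1 e2 A_def[symmetric] sin_add sin_diff cos_double_sin[of x]
      by (simp add: algebra_simps power2_eq_square)
  qed
  moreover have "degree (smult 2 ([:1, 0, -2:] * V (Suc r)) - V r) \<le> 2 * Suc (Suc r) + 1"
  proof -
    have "degree ([:1, 0, -2:] * V (Suc r)) \<le> degree [:1, 0, -2::real:] + degree (V (Suc r))"
      by (rule degree_mult_le)
    also have "\<dots> \<le> 2 + (2 * Suc r + 1)" using 3 by simp
    finally have d1: "degree (smult 2 ([:1, 0, -2:] * V (Suc r))) \<le> 2 * Suc (Suc r) + 1"
      by simp
    have d2: "degree (V r) \<le> 2 * Suc (Suc r) + 1" using 3 by simp
    show ?thesis using degree_diff_le[OF d1 d2] .
  qed
  ultimately show ?case using 3 by (simp add: algebra_simps power2_eq_square)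
qed

definition QQ :: "(nat \<Rightarrow> real) \<Rightarrow> nat \<Rightarrow> real poly" where
  "QQ \<beta> n = (\<Sum>k=1..n. smult (\<beta> k / 2) (V k + V (k - 1)))"

lemma QQ_poly: "poly (QQ \<beta> n) (sin (t/2)) = (\<Sum>k=1..n. \<beta> k * sin (real k * t)) * cos (t/2)"
  unfolding QQ_def poly_sum sum_distrib_right
proof (rule sum.cong)
  fix k assume "k \<in> {1..n}"
  then have k: "k \<ge> 1" by simp
  have r: "2 * real (k - 1) + 1 = 2 * real k - 1" using k by (simp add: of_nat_diff)
  have "poly (V k + V (k - 1)) (sin (t/2)) = sin ((2 * real k + 1) * (t/2)) + sin ((2 * real k - 1) * (t/2))"
    using V_props[of k "t/2"] V_props[of "k-1" "t/2"] r by simp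
  also have "\<dots> = 2 * sin (real k * t) * cos (t/2)"
  proof -
    have e1: "(2 * real k + 1) * (t/2) = real k * t + t/2" by (simp add: algebra_simps)
    have e2: "(2 * real k - 1) * (t/2) = real k * t - t/2" by (simp add: algebra_simps)
    show ?thesis unfolding e1 e2 sin_add sin_diff by simp
  qed
  finally show "poly (smult (\<beta> k / 2) (V k + V (k - 1))) (sin (t/2)) = \<beta> k * sin (real k * t) * cos (t/2)"
    by simp
qed simp

lemma QQ_degree: "degree (QQ \<beta> n) \<le> 2 * n + 1"
  unfolding QQ_def
proof (rule degree_sum_le)
  fix k assume "k \<in> {1..n}"
  then have "degree (V k) \<le> 2 * n + 1" "degree (V (k-1)) \<le> 2 * n + 1"
    using V_props[of k 0] V_props[of "k-1" 0] by auto
  then have "degree (V k + V (k - 1)) \<le> 2 * n + 1" by (rule degree_add_le)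
  then show "degree (smult (\<beta> k / 2) (V k + V (k - 1))) \<le> 2 * n + 1"
    using degree_smult_le order_trans by blast
qed simp

lemma sin_lower:
  assumes "0 < x" "x < pi/2"
  shows "sin x \<ge> 0.58 * x"
proof -
  have "\<bar>sin x - (\<Sum>m<3. sin_coeff m * x ^ m)\<bar> \<le> inverse (fact 3) * \<bar>x\<bar> ^ 3"
    by (rule Maclaurin_sin_bound)
  moreover have "(\<Sum>m<3. sin_coeff m * x ^ m) = x"
    by (simp add: numeral_3_eq_3 sin_coeff_def)
  moreover have "inverse (fact 3) * \<bar>x\<bar> ^ 3 = x^3 / (6::real)"
  proof -
    have "fact 3 = (6::real)" by (simp add: numeral_3_eq_3)
    moreover
    have "\<bar>x\<bar> = x" using assms by simp
    ultimately show ?thesis by (simp only: divide_inverse mult.commute)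
  qed
  ultimately have h: "sin x \<ge> x - x^3 / 6" by (simp only:)
  have "x < 1.5708" using assms pi_approx by simp
  then have "x^2 < 1.5708^2" using assms by (intro power_strict_mono) auto
  then have "x^2 / 6 \<le> 0.42" by (simp add: power2_eq_square)
  then have "x * (x^2/6) \<le> x * 0.42" using assms by (intro mult_left_mono) auto
  then have "x^3 / 6 \<le> 0.42 * x" by (simp only: power3_eq_cube power2_eq_square)
  then show ?thesis using h by simp
qed

lemma main_bound:
  fixes T :: "real \<Rightarrow> real" and \<beta> :: "nat \<Rightarrow> real"
  assumes b: "0 < b" "b < pi" and n: "n \<ge> 1"
    and T: "\<And>t. T t = (\<Sum>k=1..n. \<beta> k * sin (real k * t))"
    and M: "\<And>t. t \<in> {-b..b} \<Longrightarrow> \<bar>T t\<bar> \<le> M"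
    and t0: "t0 \<in> {-b/2..b/2}"
    and D: "(T has_real_derivative D0) (at t0)"
  shows "\<bar>D0\<bar> \<le> 9.5 / b * real n * M"
proof -
  define Q where "Q = QQ \<beta> n"
  have QT: "poly Q (sin (t/2)) = T t * cos (t/2)" for t using QQ_poly T Q_def by simp
  define a where "a = sin (b/2)"
  have ab: "a \<ge> 0.29 * b" using sin_lower[of "b/2"] b unfolding a_def by simp
  have a_pos: "a > 0" using ab b by simp
  define \<sigma> where "\<sigma> = sin (b/4)"
  have \<sigma>0: "0 \<le> \<sigma>" unfolding \<sigma>_def using b by (intro sin_ge_zero) auto
  have "\<sigma> \<le> sin (pi/4)" unfolding \<sigma>_def using b by (subst sin_mono_le_eq) auto
  then have "\<sigma> \<le> sqrt 2 / 2" by (simp add: sin_45)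
  then have "\<sigma>^2 \<le> (sqrt 2 / 2)^2" using \<sigma>0 by (intro power_mono) auto
  then have \<sigma>2: "\<sigma>^2 \<le> 1/2" by (simp add: power_divide)
  have a_eq: "a = 2 * \<sigma> * cos (b/4)"
    unfolding a_def \<sigma>_def using sin_double[of "b/4"] by simp
  have a2: "a^2 \<ge> 2 * \<sigma>^2"
  proof -
    have "a^2 = 4 * \<sigma>^2 * (1 - \<sigma>^2)"
      unfolding a_eq using cos_squared_eq[of "b/4"] unfolding \<sigma>_def[symmetric] by (simp add: power_mult_distrib)
    moreover have "2 * \<sigma>^2 * (1 - 2 * \<sigma>^2) \<ge> 0" using \<sigma>2 by simp
    ultimately show ?thesis by (simp add: algebra_simps)
  qed
  define x0 where "x0 = t0 / 2"
  define s0 where "s0 = sin x0"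
  have x0: "\<bar>x0\<bar> \<le> b/4" using t0 unfolding x0_def by auto
  have "s0 \<le> \<sigma>" unfolding s0_def \<sigma>_def using x0 b by (subst sin_mono_le_eq) auto
  moreover have "- s0 \<le> \<sigma>" unfolding s0_def \<sigma>_def sin_minus[symmetric] using x0 b by (subst sin_mono_le_eq) auto
  ultimately have s0: "\<bar>s0\<bar> \<le> \<sigma>" by simp
  have s02: "s0^2 \<le> \<sigma>^2" using power_mono[OF s0, of 2] by simp
  have cx0: "cos x0 > 0" using x0 b by (intro cos_gt_zero_pi) auto
  have s0c: "\<bar>s0\<bar> \<le> cos x0"
  proof (rule power2_le_imp_le)
    show "\<bar>s0\<bar>^2 \<le> (cos x0)^2" using cos_squared_eq[of x0] s02 \<sigma>2 unfolding s0_def by simp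
  qed (use cx0 in simp)
  define y0 where "y0 = s0 / a"
  have y02: "y0^2 \<le> 1/2"
  proof -
    have "s0^2 \<le> a^2 / 2" using s02 a2 by simp
    then show ?thesis unfolding y0_def using a_pos by (simp add: power_divide divide_simps)
  qed
  have y0abs: "\<bar>y0\<bar> \<le> 1"
  proof (rule power2_le_imp_le)
    show "\<bar>y0\<bar>^2 \<le> 1^2" using y02 by simp
  qed simp
  define \<theta>0 where "\<theta>0 = arccos y0"
  have c\<theta>: "cos \<theta>0 = y0" unfolding \<theta>0_def using y0abs by simp
  have s\<theta>: "sin \<theta>0 \<ge> 0.7"
  proof -
    have "sin \<theta>0 = sqrt (1 - y0^2)" unfolding \<theta>0_def using y0abs by (simp add: sin_arccos)
    moreover have "0.7 \<le> sqrt (1 - y0^2)" using y02 by (intro real_le_rsqrt) (simp add: power2_eq_square)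
    ultimately show ?thesis by simp
  qed
  define G where "G = (\<lambda>\<theta>. poly Q (a * cos \<theta>))"
  have tpG: "tp (2*n+1) G"
  proof -
    have "degree (Q \<circ>\<^sub>p [:0, a:]) \<le> 2*n+1"
      using degree_pcompose_le[of Q "[:0, a:]"] QQ_degree[of \<beta> n] a_pos unfolding Q_def by simp
    then have "tp (2*n+1) (\<lambda>\<theta>. poly (Q \<circ>\<^sub>p [:0, a:]) (cos \<theta>))" by (rule tp_poly)
    then show ?thesis unfolding G_def by (simp add: poly_pcompose mult.commute)
  qed
  have boundG: "\<bar>G \<theta>\<bar> \<le> M" for \<theta>
  proof -
    define y where "y = a * cos \<theta>"
    have ya: "\<bar>y\<bar> \<le> a" unfolding y_def using a_pos abs_cos_le_one[of \<theta>]
      by (simp add: abs_mult mult_left_le)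
    have a1: "a \<le> 1" unfolding a_def by simp
    have asa: "arcsin a = b/2" unfolding a_def using b by (intro arcsin_sin) auto
    have "arcsin y \<le> arcsin a" using ya a1 by (intro arcsin_le_arcsin) auto
    moreover have "arcsin (-a) \<le> arcsin y" using ya a1 by (intro arcsin_le_arcsin) auto
    moreover have "arcsin (-a) = - arcsin a" using a1 a_pos by (intro arcsin_minus) auto
    ultimately have tin: "2 * arcsin y \<in> {-b..b}" using asa by auto
    have sy: "sin (2 * arcsin y / 2) = y" using ya a1 by simp
    have "G \<theta> = T (2 * arcsin y) * cos (2 * arcsin y / 2)"
      unfolding G_def y_def[symmetric] using QT[of "2 * arcsin y"] sy by simp
    then have "\<bar>G \<theta>\<bar> \<le> \<bar>T (2 * arcsin y)\<bar>"
      by (simp add: abs_mult mult_left_le)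
    then show ?thesis using M[OF tin] by simp
  qed
  have derivG: "(G has_real_derivative ((- a * sin \<theta>0) * poly (pderiv Q) (a * cos \<theta>0))) (at \<theta>0)"
    unfolding G_def by (auto intro!: derivative_eq_intros)
  have bern: "\<bar>(- a * sin \<theta>0) * poly (pderiv Q) (a * cos \<theta>0)\<bar> \<le> real (2*n+1) * M"
    using bernstein[OF _ tpG boundG derivG] by simp
  have acs: "a * cos \<theta>0 = s0" unfolding c\<theta> y0_def using a_pos by simp
  define q where "q = \<bar>poly (pderiv Q) s0\<bar>"
  have bq: "a * sin \<theta>0 * q \<le> real (2*n+1) * M"
    using bern unfolding acs q_def using a_pos s\<theta> by (simp add: abs_mult)
  have dL: "((\<lambda>t. poly Q (sin (t/2))) has_real_derivative (poly (pderiv Q) s0 * cos x0 / 2)) (at t0)"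
    unfolding s0_def x0_def by (auto intro!: derivative_eq_intros)
  have dR: "((\<lambda>t. T t * cos (t/2)) has_real_derivative (D0 * cos x0 - T t0 * s0 / 2)) (at t0)"
    unfolding s0_def x0_def by (auto intro!: derivative_eq_intros D)
  have "(\<lambda>t. poly Q (sin (t/2))) = (\<lambda>t. T t * cos (t/2))" using QT by auto
  then have eq: "poly (pderiv Q) s0 * cos x0 / 2 = D0 * cos x0 - T t0 * s0 / 2"
    using dL dR DERIV_unique by metis
  then have D0eq: "D0 = poly (pderiv Q) s0 / 2 + T t0 * s0 / (2 * cos x0)"
    using cx0 by (simp add: field_simps)
  have t0b: "t0 \<in> {-b..b}" using t0 b by auto
  have M0: "M \<ge> 0" using M[OF t0b] by simp
  have "\<bar>T t0 * s0\<bar> \<le> M * cos x0"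
    using M[OF t0b] s0c M0 by (simp add: abs_mult mult_mono)
  then have "\<bar>T t0 * s0 / (2 * cos x0)\<bar> \<le> M / 2" using cx0 by (simp add: divide_simps abs_mult)
  moreover have "\<bar>D0\<bar> \<le> \<bar>poly (pderiv Q) s0 / 2\<bar> + \<bar>T t0 * s0 / (2 * cos x0)\<bar>"
    unfolding D0eq by (rule abs_triangle_ineq)
  moreover have "\<bar>poly (pderiv Q) s0 / 2\<bar> = q / 2" unfolding q_def by simp
  ultimately have D0q: "\<bar>D0\<bar> \<le> q / 2 + M / 2" by linarith
  have "0.203 * b * q \<le> a * sin \<theta>0 * q"
  proof -
    have "(0.29 * b) * 0.7 \<le> a * sin \<theta>0" using ab s\<theta> b a_pos
      by (intro mult_mono) auto
    then have "0.203 * b \<le> a * sin \<theta>0" by simp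
    then show ?thesis unfolding q_def by (intro mult_right_mono) auto
  qed
  also have "\<dots> \<le> real (2*n+1) * M" by (rule bq)
  also have "\<dots> \<le> 3 * real n * M" using n M0 by (intro mult_right_mono) auto
  finally have bq2: "b * q * 203 \<le> 3000 * (real n * M)" by simp
  have "pi * 1 \<le> pi * real n" using n by (intro mult_left_mono) auto
  then have "b \<le> pi * real n" using b by linarith
  then have "b * M \<le> pi * real n * M" using M0 by (intro mult_right_mono) auto
  also have "\<dots> \<le> 3.1416 * real n * M" using pi_approx M0 by (intro mult_right_mono) auto
  finally have bM: "b * M * 1250 \<le> 3927 * (real n * M)" by simp
  have "b * \<bar>D0\<bar> \<le> b * (q/2 + M/2)" using D0q b by (intro mult_left_mono) auto
  also have "\<dots> = b * q / 2 + b * M / 2" by (simp add: algebra_simps)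
  finally have bD: "b * \<bar>D0\<bar> \<le> b * q / 2 + b * M / 2" .
  have nM: "real n * M \<ge> 0" using M0 by simp
  have "b * \<bar>D0\<bar> * 2 \<le> 19 * (real n * M)" using bD bq2 bM nM by linarith
  then have "b * \<bar>D0\<bar> \<le> 9.5 * (real n * M)" by simp
  then have "\<bar>D0\<bar> * b \<le> 9.5 * (real n * M)" by (simp only: mult.commute)
  then have "\<bar>D0\<bar> \<le> 9.5 * (real n * M) / b" using pos_le_divide_eq[OF b(1)] by blast
  also have "\<dots> = 9.5 / b * real n * M" by simp
  finally show ?thesis .
qed


theorem lemma3p1:
  shows "\<exists>c0::real. c0 < 10 \<and>
    (\<forall>b n T. 0 < b \<and> b < pi \<and> trig_poly n T \<and> (\<forall>t. T (- t) = - T t) \<longrightarrow>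
       sup_norm_on (deriv T) (- b / 2) (b / 2) \<le> c0 / b * real n * sup_norm_on T (- b) b)"
proof (intro exI[of _ "9.5"] conjI allI impI)
  fix b :: real and n :: nat and T :: "real \<Rightarrow> real"
  assume H: "0 < b \<and> b < pi \<and> trig_poly n T \<and> (\<forall>t. T (- t) = - T t)"
  then have b: "0 < b" "b < pi" and odd: "\<And>t. T (- t) = - T t" by auto
  from H obtain \<alpha> \<beta> :: "nat \<Rightarrow> real" where
    Tf: "\<And>t. T t = \<alpha> 0 + (\<Sum>k=1..n. \<alpha> k * cos (real k * t) + \<beta> k * sin (real k * t))"
    unfolding trig_poly_def by blast
  have Ts: "T t = (\<Sum>k=1..n. \<beta> k * sin (real k * t))" for t
  proof -
    have "T t - T (- t) = (\<Sum>k=1..n. (\<alpha> k * cos (real k * t) + \<beta> k * sin (real k * t))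
        - (\<alpha> k * cos (real k * (-t)) + \<beta> k * sin (real k * (-t))))"
      unfolding Tf sum_subtractf by simp
    also have "\<dots> = (\<Sum>k=1..n. 2 * (\<beta> k * sin (real k * t)))"
      by (rule sum.cong) simp_all
    also have "\<dots> = 2 * (\<Sum>k=1..n. \<beta> k * sin (real k * t))" by (simp add: sum_distrib_left)
    finally show ?thesis using odd[of t] by simp
  qed
  define DT where "DT t = (\<Sum>k=1..n. cos (real k * t) * real k * \<beta> k)" for t
  have Teq: "T = (\<lambda>t. \<Sum>k=1..n. \<beta> k * sin (real k * t))" using Ts by auto
  have dT: "(T has_real_derivative DT t) (at t)" for t
    unfolding Teq DT_def by (auto intro!: derivative_eq_intros)
  define M where "M = sup_norm_on T (- b) b"
  have bdd: "bdd_above ((\<lambda>x. \<bar>T x\<bar>) ` {-b..b})"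
    by (intro bounded_imp_bdd_above compact_imp_bounded compact_continuous_image)
       (auto simp: Teq intro!: continuous_intros)
  have Mb: "\<bar>T t\<bar> \<le> M" if "t \<in> {-b..b}" for t
    unfolding M_def sup_norm_on_def using bdd that by (rule cSUP_upper2) simp
  have pt: "\<bar>deriv T t0\<bar> \<le> 9.5 / b * real n * M" if t0: "t0 \<in> {-b/2..b/2}" for t0
  proof (cases "n = 0")
    case True
    then have "deriv T t0 = 0" using DERIV_imp_deriv[OF dT[of t0]] by (simp add: DT_def)
    then show ?thesis using True by simp
  next
    case False
    then have n: "n \<ge> 1" by simp
    have "deriv T t0 = DT t0" using DERIV_imp_deriv[OF dT[of t0]] .
    then show ?thesis using main_bound[OF b n Ts Mb t0 dT[of t0]] by simp
  qed
  have ne: "{- b / 2..b / 2} \<noteq> {}" using b by simp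
  show "sup_norm_on (deriv T) (- b / 2) (b / 2) \<le> 9.5 / b * real n * sup_norm_on T (- b) b"
    unfolding sup_norm_on_def[of "deriv T"] M_def[symmetric]
    using ne pt by (intro cSUP_least) auto
qed simp

end
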